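(* Let $n\ge1$ and let $\phi(x)=\Phi(|x|)$ be a radial function on $\mathbb{R}^n$, where $\Phi:[0,\infty)\to[0,\infty)$ is decreasing. Suppose $\phi$ has a continuous integrable radially decreasing majorant. Then for every finite positive measure $V$ on $\mathbb{R}^n$ absolutely continuous with respect to Lebesgue measure and every fixed $\rho>0$, $$\lim_{t\to0^+}\Big\|\mathcal{M}_{\phi}(V_t)(\cdot)-\sup_{r>0}\phi_r(\cdot)\,V(\mathbb{R}^n)\Big\|_{L^{1,\infty}(\mathbb{R}^n\setminus B(0,\rho))}=0.$$
   Context: $\phi_r(x)=r^{-n}\phi(x/r)$ and $\mathcal{M}_{\phi}(\mu)(x)=\sup_{r>0}\frac{1}{r^n}\int_{\mathbb{R}^n}\phi\big(\frac{x-y}{r}\big)d\mu(y)$. A radially decreasing majorant of $\phi$ is a function $K(x)=\kappa(|x|)$ with $\kappa$ decreasing and $\phi\le K$ pointwise. $V_t(E)=V(E/t)$ with $E/t=\{x/t:x\in E\}$. For a measurable set $E$, $\|f\|_{L^{1,\infty}(E)}=\sup_{\lambda>0}\lambda|\{x\in E:|f(x)|>\lambda\}|$. *)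

theory Defs
  imports "HOL-Analysis.Analysis"
begin

definition leb_outer :: "'a::euclidean_space set \<Rightarrow> ennreal" where
  "leb_outer S = (INF A\<in>{A. A \<in> sets lebesgue \<and> S \<subseteq> A}. emeasure lebesgue A)"

definition max_op :: "('a::euclidean_space \<Rightarrow> real) \<Rightarrow> 'a measure \<Rightarrow> 'a \<Rightarrow> ennreal" where
  "max_op \<phi> \<mu> x = (SUP r\<in>{0<..}. ennreal (1 / r ^ DIM('a)) *
      (\<integral>\<^sup>+ y. ennreal (\<phi> ((1 / r) *\<^sub>R (x - y))) \<partial>\<mu>))"

text \<open>V_t(E) = V(E/t): the image of V under y \<mapsto> t y.\<close>
definition dilate_measure :: "real \<Rightarrow> 'a::euclidean_space measure \<Rightarrow> 'a measure" where
  "dilate_measure t V = distr V borel (\<lambda>y. t *\<^sub>R y)"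

definition sup_dil :: "('a::euclidean_space \<Rightarrow> real) \<Rightarrow> 'a \<Rightarrow> ennreal" where
  "sup_dil \<phi> x = (SUP r\<in>{0<..}. ennreal ((1 / r ^ DIM('a)) * \<phi> ((1 / r) *\<^sub>R x)))"

definition weak_L1_norm :: "'a::euclidean_space set \<Rightarrow> ('a \<Rightarrow> ereal) \<Rightarrow> ennreal" where
  "weak_L1_norm E f = (SUP s\<in>{0<..}. ennreal s * leb_outer {x\<in>E. ereal s < \<bar>f x\<bar>})"

end

theory Submission
  imports Defs
begin

lemma ennreal_le_suminf: "(g k :: ennreal) \<le> (\<Sum>i. g i)"
proof -
  have "(\<Sum>i\<in>{k}. g i) \<le> (\<Sum>i. g i)" by (rule sum_le_suminf[OF summableI]) auto
  then show ?thesis by simp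
qed

locale phidec =
  fixes \<Phi> :: "real \<Rightarrow> real"
  assumes \<Phi>_nonneg: "\<And>s. s \<ge> 0 \<Longrightarrow> \<Phi> s \<ge> 0" and \<Phi>_decr: "antimono_on {0..} \<Phi>"
begin

lemma Phi_le: "0 \<le> a \<Longrightarrow> a \<le> b \<Longrightarrow> \<Phi> b \<le> \<Phi> a"
  using \<Phi>_decr by (auto simp: monotone_on_def)

lemma dyadic_index:
  fixes q :: real assumes "q \<ge> 1"
  obtains k :: nat where "2 ^ k \<le> q" "q < 2 ^ (k + 1)"
proof -
  have ex: "\<exists>N::nat. q < 2 ^ N" by (rule real_arch_pow) simp
  define N where "N = (LEAST N::nat. q < 2 ^ N)"
  have N: "q < 2 ^ N" unfolding N_def using LeastI_ex[OF ex] .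
  have "N \<noteq> 0" by (rule notI) (use N assms in simp)
  then obtain k where k: "N = k + 1" by (cases N) auto
  have "\<not> q < 2 ^ k" using not_less_Least[of k "\<lambda>N::nat. q < 2 ^ N"] k unfolding N_def by simp
  then show ?thesis using N k by (intro that) (auto simp: not_less)
qed

lemma dyadic_pointwise:
  fixes w :: "'a::euclidean_space" and r :: real
  assumes r: "r > 0"
  shows "ennreal (\<Phi> (norm w / r)) \<le> ennreal (\<Phi> 0) * indicator (ball 0 r) w
          + (\<Sum>k. ennreal (\<Phi> (2 ^ k)) * indicator (ball 0 (2 ^ (k + 1) * r)) w)"
proof (cases "norm w < r")
  case True
  then have "\<Phi> (norm w / r) \<le> \<Phi> 0" using r by (intro Phi_le) auto
  then show ?thesis using True by (intro add_increasing2) (auto intro: ennreal_leI)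
next
  case False
  then have "norm w / r \<ge> 1" using r by simp
  then obtain k :: nat where k: "2 ^ k \<le> norm w / r" "norm w / r < 2 ^ (k + 1)"
    by (rule dyadic_index)
  have "\<Phi> (norm w / r) \<le> \<Phi> (2 ^ k)" using k by (intro Phi_le) auto
  moreover have "w \<in> ball 0 (2 ^ (k + 1) * r)" using k r by (simp add: field_simps)
  ultimately have "ennreal (\<Phi> (norm w / r)) \<le> ennreal (\<Phi> (2 ^ k)) * indicator (ball 0 (2 ^ (k + 1) * r)) w"
    by (simp add: ennreal_leI)
  also have "\<dots> \<le> (\<Sum>k. ennreal (\<Phi> (2 ^ k)) * indicator (ball 0 (2 ^ (k + 1) * r)) w)"
    by (rule ennreal_le_suminf)
  finally show ?thesis by (simp add: add_increasing)
qed

definition Sdy :: "nat \<Rightarrow> ennreal" where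
  "Sdy n = ennreal (\<Phi> 0) + (\<Sum>k. ennreal (\<Phi> (2 ^ k) * 2 ^ ((k + 1) * n)))"

lemma dyadic_integral:
  fixes \<mu> :: "'a::euclidean_space measure" and x :: 'a
  assumes sets: "sets \<mu> = sets borel" and Out: "Out \<in> sets borel" and r: "r > 0" and m: "m \<ge> 0"
    and bd: "\<And>s. s > 0 \<Longrightarrow> emeasure \<mu> (ball x s \<inter> Out) \<le> ennreal (m * s ^ DIM('a))"
  shows "ennreal (1 / r ^ DIM('a)) * (\<integral>\<^sup>+ w. ennreal (\<Phi> (norm (x - w) / r)) * indicator Out w \<partial>\<mu>)
          \<le> ennreal m * Sdy DIM('a)"
proof -
  define n where "n = DIM('a)"
  have meas[measurable]: "ball y s \<in> sets \<mu>" "Out \<in> sets \<mu>" for y s using sets Out by auto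
  have "(\<integral>\<^sup>+ w. ennreal (\<Phi> (norm (x - w) / r)) * indicator Out w \<partial>\<mu>)
     \<le> (\<integral>\<^sup>+ w. ennreal (\<Phi> 0) * indicator (ball x r \<inter> Out) w
          + (\<Sum>k. ennreal (\<Phi> (2 ^ k)) * indicator (ball x (2 ^ (k + 1) * r) \<inter> Out) w) \<partial>\<mu>)"
  proof (intro nn_integral_mono)
    fix w
    have "ennreal (\<Phi> (norm (x - w) / r)) * indicator Out w \<le>
       (ennreal (\<Phi> 0) * indicator (ball 0 r) (x - w)
          + (\<Sum>k. ennreal (\<Phi> (2 ^ k)) * indicator (ball 0 (2 ^ (k + 1) * r)) (x - w))) * indicator Out w"
      by (intro mult_right_mono dyadic_pointwise r) auto
    also have "\<dots> = ennreal (\<Phi> 0) * indicator (ball x r \<inter> Out) w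
          + (\<Sum>k. ennreal (\<Phi> (2 ^ k)) * indicator (ball x (2 ^ (k + 1) * r) \<inter> Out) w)"
    proof -
      have ib: "indicator (ball 0 \<rho>) (x - w) = (indicator (ball x \<rho>) w :: ennreal)" for \<rho>
        by (simp add: indicator_def dist_norm norm_minus_commute[of x w])
      show ?thesis unfolding ib distrib_right ennreal_suminf_multc[symmetric] mult.assoc indicator_inter_arith ..
    qed
    finally show "ennreal (\<Phi> (norm (x - w) / r)) * indicator Out w \<le> \<dots>" .
  qed
  also have "\<dots> = ennreal (\<Phi> 0) * emeasure \<mu> (ball x r \<inter> Out)
        + (\<Sum>k. ennreal (\<Phi> (2 ^ k)) * emeasure \<mu> (ball x (2 ^ (k + 1) * r) \<inter> Out))"
    by (simp add: nn_integral_add nn_integral_suminf nn_integral_cmult)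
  also have "\<dots> \<le> ennreal (\<Phi> 0) * ennreal (m * r ^ n)
        + (\<Sum>k. ennreal (\<Phi> (2 ^ k)) * ennreal (m * (2 ^ (k + 1) * r) ^ n))"
    using r unfolding n_def by (intro add_mono mult_left_mono suminf_le bd) auto
  also have "\<dots> = ennreal (m * r ^ n) * Sdy n"
  proof -
    have "ennreal (\<Phi> (2 ^ k)) * ennreal (m * (2 ^ (k + 1) * r) ^ n)
        = ennreal (m * r ^ n) * ennreal (\<Phi> (2 ^ k) * 2 ^ ((k + 1) * n))" for k
      using m r \<Phi>_nonneg[of "2^k"] by (simp add: ennreal_mult'[symmetric] power_mult_distrib power_mult mult_ac power_add)
    then have "(\<Sum>k. ennreal (\<Phi> (2 ^ k)) * ennreal (m * (2 ^ (k + 1) * r) ^ n))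
        = ennreal (m * r ^ n) * (\<Sum>k. ennreal (\<Phi> (2 ^ k) * 2 ^ ((k + 1) * n)))"
      by (simp only: ennreal_suminf_cmult)
    then show ?thesis unfolding Sdy_def
      by (simp add: distrib_left mult.commute)
  qed
  finally have "ennreal (1 / r ^ n) * (\<integral>\<^sup>+ w. ennreal (\<Phi> (norm (x - w) / r)) * indicator Out w \<partial>\<mu>)
       \<le> ennreal (1 / r ^ n) * (ennreal (m * r ^ n) * Sdy n)" by (rule mult_left_mono) simp
  also have "\<dots> = ennreal m * Sdy n"
    using r m by (simp add: ennreal_mult'[symmetric] mult.assoc[symmetric])
  finally show ?thesis unfolding n_def .
qed

end

context phidec begin

lemma Phi_ball:
  assumes u: "u > 0"
  shows "ennreal (\<Phi> u) * ennreal (unit_ball_vol (real DIM('a)) * u ^ DIM('a))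
     \<le> (\<integral>\<^sup>+ (z::'a::euclidean_space). ennreal (\<Phi> (norm z)) \<partial>lborel)"
proof -
  have "ennreal (\<Phi> u) * ennreal (unit_ball_vol (real DIM('a)) * u ^ DIM('a))
      = (\<integral>\<^sup>+ (z::'a). ennreal (\<Phi> u) * indicator (ball 0 u) z \<partial>lborel)"
    using u by (subst nn_integral_cmult_indicator) (auto simp: emeasure_ball)
  also have "\<dots> \<le> (\<integral>\<^sup>+ (z::'a). ennreal (\<Phi> (norm z)) \<partial>lborel)"
    by (intro nn_integral_mono) (auto simp: indicator_def intro!: ennreal_leI Phi_le)
  finally show ?thesis .
qed

definition Ce :: "nat \<Rightarrow> ennreal" where
  "Ce n = (SUP u\<in>{0<..}. ennreal (u ^ n * \<Phi> u))"

lemma Ce_bound: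
  "Ce DIM('a) * ennreal (unit_ball_vol (real DIM('a)))
     \<le> (\<integral>\<^sup>+ (z::'a::euclidean_space). ennreal (\<Phi> (norm z)) \<partial>lborel)"
  unfolding Ce_def SUP_mult_right_ennreal
proof (rule SUP_least)
  fix u :: real assume "u \<in> {0<..}"
  then have u: "u > 0" by simp
  have "ennreal (u ^ DIM('a) * \<Phi> u) * ennreal (unit_ball_vol (real DIM('a)))
      = ennreal (\<Phi> u) * ennreal (unit_ball_vol (real DIM('a)) * u ^ DIM('a))"
    using u \<Phi>_nonneg[of u] by (simp add: ennreal_mult'[symmetric] mult_ac)
  also have "\<dots> \<le> (\<integral>\<^sup>+ (z::'a). ennreal (\<Phi> (norm z)) \<partial>lborel)" by (rule Phi_ball[OF u])
  finally show "ennreal (u ^ DIM('a) * \<Phi> u) * ennreal (unit_ball_vol (real DIM('a))) \<le> \<dots>" .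
qed

lemma Ce_finite:
  assumes "(\<integral>\<^sup>+ (z::'a::euclidean_space). ennreal (\<Phi> (norm z)) \<partial>lborel) < \<infinity>"
  shows "Ce DIM('a) < \<infinity>"
proof -
  have "Ce DIM('a) * ennreal (unit_ball_vol (real DIM('a))) \<le> (\<integral>\<^sup>+ (z::'a). ennreal (\<Phi> (norm z)) \<partial>lborel)"
    by (rule Ce_bound)
  also have "\<dots> < \<infinity>" by (rule assms)
  finally have lt: "Ce DIM('a) * ennreal (unit_ball_vol (real DIM('a))) < \<infinity>" .
  have "unit_ball_vol (real DIM('a)) > 0" by (rule unit_ball_vol_pos) simp
  then have "ennreal (unit_ball_vol (real DIM('a))) \<noteq> 0" by (metis ennreal_eq_0_iff not_le)
  moreover have "Ce DIM('a) = 0 \<or> ennreal (unit_ball_vol (real DIM('a))) = 0 \<or> (Ce DIM('a) < top \<and> ennreal (unit_ball_vol (real DIM('a))) < top)"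
    by (rule ennreal_mult_less_top[THEN iffD1, OF lt[unfolded infinity_ennreal_def]])
  ultimately show ?thesis by (auto simp: infinity_ennreal_def)
qed

lemma sup_scale:
  assumes s: "s > 0"
  shows "(SUP r\<in>{0<..}. ennreal (1 / r ^ n * \<Phi> (s / r))) = ennreal (1 / s ^ n) * Ce n"
proof -
  have img: "(\<lambda>r. s / r) ` {0<..} = ({0<..} :: real set)"
  proof (rule set_eqI, rule iffI)
    fix u :: real assume "u \<in> {0<..}"
    then have "u = s / (s / u)" "s / u \<in> {0<..}" using s by auto
    then show "u \<in> (\<lambda>r. s / r) ` {0<..}" by blast
  qed (use s in auto)
  have "ennreal (1 / s ^ n) * Ce n = (SUP u\<in>{0<..}. ennreal (1 / s ^ n) * ennreal (u ^ n * \<Phi> u))"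
    unfolding Ce_def SUP_mult_left_ennreal ..
  also have "\<dots> = (SUP u\<in>(\<lambda>r. s / r) ` {0<..}. ennreal (1 / s ^ n) * ennreal (u ^ n * \<Phi> u))"
    unfolding img ..
  also have "\<dots> = (SUP r\<in>{0<..}. ennreal (1 / s ^ n) * ennreal ((s / r) ^ n * \<Phi> (s / r)))"
    by (simp add: image_image)
  also have "\<dots> = (SUP r\<in>{0<..}. ennreal (1 / r ^ n * \<Phi> (s / r)))"
  proof (intro SUP_cong refl)
    fix r :: real assume "r \<in> {0<..}"
    then show "ennreal (1 / s ^ n) * ennreal ((s / r) ^ n * \<Phi> (s / r)) = ennreal (1 / r ^ n * \<Phi> (s / r))"
      using s \<Phi>_nonneg[of "s / r"] by (simp add: ennreal_mult'[symmetric] power_divide)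
  qed
  finally show ?thesis ..
qed

lemma Sdy_finite:
  assumes I: "(\<integral>\<^sup>+ (z::'a::euclidean_space). ennreal (\<Phi> (norm z)) \<partial>lborel) < \<infinity>"
  shows "Sdy DIM('a) < \<infinity>"
proof -
  define n where "n = DIM('a)"
  have n1: "n \<ge> 1" unfolding n_def by (simp add: DIM_positive Suc_leI)
  define \<omega> where "\<omega> = unit_ball_vol (real n)"
  have \<omega>: "\<omega> > 0" unfolding \<omega>_def by simp
  define A where "A k = ball (0::'a) (2 ^ k) - ball 0 (2 ^ k / 2)" for k :: nat
  define c where "c = 1 - 1 / (2::real) ^ n"
  have c: "c > 0" unfolding c_def using n1 by simp
  have volA: "emeasure lborel (A k) = ennreal (\<omega> * 2 ^ (k * n) * c)" for k
  proof -
    have "emeasure lborel (A k) = emeasure lborel (ball (0::'a) (2 ^ k)) - emeasure lborel (ball (0::'a) (2 ^ k / 2))"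
      unfolding A_def by (intro emeasure_Diff subset_ball) (auto simp: emeasure_ball)
    also have "\<dots> = ennreal (\<omega> * (2 ^ k) ^ n) - ennreal (\<omega> * (2 ^ k / 2) ^ n)"
      by (simp add: emeasure_ball \<omega>_def n_def)
    also have "\<dots> = ennreal (\<omega> * (2 ^ k) ^ n - \<omega> * (2 ^ k / 2) ^ n)"
      using \<omega> by (intro ennreal_minus) (auto intro!: mult_left_mono power_mono)
    also have "\<omega> * (2 ^ k) ^ n - \<omega> * (2 ^ k / 2) ^ n = \<omega> * 2 ^ (k * n) * c"
      unfolding c_def by (simp add: power_divide power_mult[symmetric] mult.commute field_simps)
    finally show ?thesis .
  qed
  have disj: "(\<Sum>k. ennreal (\<Phi> (2 ^ k)) * indicator (A k) z) \<le> ennreal (\<Phi> (norm z))" for z :: 'a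
  proof (cases "\<exists>j. z \<in> A j")
    case True
    then obtain j where j: "z \<in> A j" by blast
    have other: "z \<notin> A k" if "k \<noteq> j" for k
    proof
      assume k: "z \<in> A k"
      show False
      proof (cases "k < j")
        case True
        then have "(2::real) ^ k \<le> 2 ^ j / 2"
          using power_increasing[of "Suc k" j "2::real"] by simp
        then show False using j k unfolding A_def by auto
      next
        case False
        then have "j < k" using that by simp
        then have "(2::real) ^ j \<le> 2 ^ k / 2"
          using power_increasing[of "Suc j" k "2::real"] by simp
        then show False using j k unfolding A_def by auto
      qed
    qed
    have "(\<lambda>k. ennreal (\<Phi> (2 ^ k)) * indicator (A k) z) = (\<lambda>k. if k = j then ennreal (\<Phi> (2 ^ j)) else 0)"
      using j other by (auto simp: fun_eq_iff)
    then have "(\<Sum>k. ennreal (\<Phi> (2 ^ k)) * indicator (A k) z) = ennreal (\<Phi> (2 ^ j))"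
      using sums_unique[OF sums_single[of j "\<lambda>_. ennreal (\<Phi> (2 ^ j))"]] by simp
    also have "\<dots> \<le> ennreal (\<Phi> (norm z))"
      using j unfolding A_def by (auto intro!: ennreal_leI Phi_le)
    finally show ?thesis .
  qed auto
  have "(\<Sum>k. ennreal (\<Phi> (2 ^ k)) * emeasure lborel (A k))
      = (\<integral>\<^sup>+ z. (\<Sum>k. ennreal (\<Phi> (2 ^ k)) * indicator (A k) z) \<partial>lborel)"
  proof -
    have "(\<Sum>k. ennreal (\<Phi> (2 ^ k)) * emeasure lborel (A k)) = (\<Sum>k. \<integral>\<^sup>+ z. ennreal (\<Phi> (2 ^ k)) * indicator (A k) z \<partial>lborel)"
      by (intro suminf_cong, subst nn_integral_cmult_indicator) (auto simp: A_def)
    also have "\<dots> = (\<integral>\<^sup>+ z. (\<Sum>k. ennreal (\<Phi> (2 ^ k)) * indicator (A k) z) \<partial>lborel)"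
    proof -
      have [measurable]: "A k \<in> sets borel" for k unfolding A_def by auto
      show ?thesis by (intro nn_integral_suminf[symmetric]) measurable
    qed
    finally show ?thesis .
  qed
  also have "\<dots> \<le> (\<integral>\<^sup>+ (z::'a). ennreal (\<Phi> (norm z)) \<partial>lborel)"
    by (intro nn_integral_mono disj)
  finally have sumA: "(\<Sum>k. ennreal (\<Phi> (2 ^ k)) * emeasure lborel (A k)) < \<infinity>" using I by simp
  have "(\<Sum>k. ennreal (\<Phi> (2 ^ k) * 2 ^ ((k + 1) * n)))
     = ennreal (2 ^ n / (\<omega> * c)) * (\<Sum>k. ennreal (\<Phi> (2 ^ k)) * emeasure lborel (A k))"
  proof -
    have "ennreal (\<Phi> (2 ^ k) * 2 ^ ((k + 1) * n)) = ennreal (2 ^ n / (\<omega> * c)) * (ennreal (\<Phi> (2 ^ k)) * emeasure lborel (A k))" for k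
      using \<omega> c \<Phi>_nonneg[of "2 ^ k"]
      by (simp add: volA ennreal_mult'[symmetric] power_add mult.commute[of k n] power_mult)
    then show ?thesis by (simp only: ennreal_suminf_cmult)
  qed
  also have "\<dots> < \<infinity>" using sumA by (simp add: ennreal_mult_less_top)
  finally show ?thesis unfolding Sdy_def n_def by simp
qed

end
lemma emeasure_UN_countable_le:
  assumes [measurable]: "\<And>i. i \<in> I \<Longrightarrow> X i \<in> sets M" and I: "countable I"
  shows "emeasure M (\<Union>(X ` I)) \<le> (\<integral>\<^sup>+i. emeasure M (X i) \<partial>count_space I)"
proof -
  note sets.countable_UN'[unfolded subset_eq, measurable]
  have le: "indicator (\<Union>(X ` I)) x \<le> (\<integral>\<^sup>+ i. indicator (X i) x \<partial>count_space I)" for x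
  proof (cases "x \<in> \<Union>(X ` I)")
    case True
    then obtain j where j: "j \<in> I" "x \<in> X j" by auto
    have "(\<integral>\<^sup>+ i. indicator {j} i \<partial>count_space I) \<le> (\<integral>\<^sup>+ i. indicator (X i) x \<partial>count_space I)"
      by (intro nn_integral_mono) (auto simp: j split: split_indicator)
    moreover have "(\<integral>\<^sup>+ i. indicator {j} i \<partial>count_space I) = (1::ennreal)"
      using j by (subst nn_integral_indicator) auto
    ultimately show ?thesis using True by simp
  qed simp
  have "emeasure M (\<Union>(X ` I)) = (\<integral>\<^sup>+x. indicator (\<Union>(X ` I)) x \<partial>M)"
    using I by simp
  also have "\<dots> \<le> (\<integral>\<^sup>+x. \<integral>\<^sup>+ i. indicator (X i) x \<partial>count_space I \<partial>M)"
    by (intro nn_integral_mono le)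
  also have "\<dots> = (\<integral>\<^sup>+i. \<integral>\<^sup>+x. indicator (X i) x \<partial>M \<partial>count_space I)"
    using I by (intro nn_integral_count_space_nn_integral) auto
  also have "\<dots> = (\<integral>\<^sup>+i. emeasure M (X i) \<partial>count_space I)"
    by (intro nn_integral_cong) auto
  finally show ?thesis .
qed


lemma vitali_weak:
  fixes \<mu> :: "'a::euclidean_space measure" and Out :: "'a set" and m :: real
  assumes sets: "sets \<mu> = sets borel" and Out: "Out \<in> sets borel"
    and fin: "emeasure \<mu> Out < \<infinity>" and m: "m > 0"
  shows "\<exists>U \<in> sets borel. {x. \<exists>s>0. ennreal (m * s ^ DIM('a)) < emeasure \<mu> (ball x s \<inter> Out)} \<subseteq> U
     \<and> emeasure lborel U \<le> ennreal (5 ^ DIM('a) * unit_ball_vol (real DIM('a)) / m) * emeasure \<mu> Out"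
proof -
  define n where "n = DIM('a)"
  have n1: "n \<ge> 1" unfolding n_def by (simp add: DIM_positive Suc_leI)
  define \<omega> where "\<omega> = unit_ball_vol (real n)"
  have \<omega>: "\<omega> > 0" unfolding \<omega>_def by simp
  define E where "E = {x. \<exists>s>0. ennreal (m * s ^ n) < emeasure \<mu> (ball x s \<inter> Out)}"
  define r where "r x = (SOME s. s > 0 \<and> ennreal (m * s ^ n) < emeasure \<mu> (ball x s \<inter> Out))" for x
  have r: "r x > 0 \<and> ennreal (m * r x ^ n) < emeasure \<mu> (ball x (r x) \<inter> Out)" if "x \<in> E" for x
  proof -
    have "\<exists>s. s > 0 \<and> ennreal (m * s ^ n) < emeasure \<mu> (ball x s \<inter> Out)" using that unfolding E_def by auto
    from someI_ex[OF this] show ?thesis unfolding r_def .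
  qed
  define \<eta> where "\<eta> = enn2real (emeasure \<mu> Out)"
  have \<eta>: "emeasure \<mu> Out = ennreal \<eta>" unfolding \<eta>_def using fin by simp
  have mono_out: "emeasure \<mu> (ball x s \<inter> Out) \<le> emeasure \<mu> Out" for x s
    by (rule emeasure_mono) (use sets Out in auto)
  define B where "B = max 1 (\<eta> / m)"
  have rB: "0 < r x \<and> r x \<le> B" if "x \<in> E" for x
  proof -
    have "ennreal (m * r x ^ n) < ennreal \<eta>" using r[OF that] mono_out[of x "r x"] \<eta> by auto
    then have lt: "m * r x ^ n < \<eta>" by (subst (asm) ennreal_less_iff) (use r[OF that] m in auto)
    have "r x \<le> B"
    proof (cases "r x \<le> 1")
      case False
      then have "r x \<le> r x ^ n" using n1
        by (metis less_eq_real_def not_le one_le_power power_increasing power_one_right)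
      then have "m * r x < \<eta>" using lt m by (smt (verit) mult_left_mono)
      then have "r x < \<eta> / m" using m by (simp add: field_simps)
      then show ?thesis unfolding B_def by simp
    qed (simp add: B_def)
    then show ?thesis using r[OF that] by simp
  qed
  have cov: "E \<subseteq> (\<Union>i\<in>E. ball (id i) (r i))" using r by force
  obtain C where C: "countable C" "C \<subseteq> E"
    and pw: "pairwise (\<lambda>i j. disjnt (ball (id i) (r i)) (ball (id j) (r j))) C"
    and cov5: "E \<subseteq> (\<Union>i\<in>C. ball (id i) (5 * r i))"
    by (rule Vitali_covering_lemma_balls[OF cov rB]) auto
  define U where "U = (\<Union>i\<in>C. ball i (5 * r i))"
  have Ub: "U \<in> sets borel" unfolding U_def by (intro borel_open) auto
  have "emeasure lborel U \<le> (\<integral>\<^sup>+i. emeasure lborel (ball i (5 * r i)) \<partial>count_space C)"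
    unfolding U_def using C by (intro emeasure_UN_countable_le) auto
  also have "\<dots> \<le> (\<integral>\<^sup>+i. ennreal (5 ^ n * \<omega> / m) * emeasure \<mu> (ball i (r i) \<inter> Out) \<partial>count_space C)"
  proof (intro nn_integral_mono)
    fix i assume "i \<in> space (count_space C)"
    then have i: "i \<in> E" using C by auto
    have "emeasure lborel (ball i (5 * r i)) = ennreal (\<omega> * (5 * r i) ^ n)"
      using rB[OF i] by (simp add: emeasure_ball \<omega>_def n_def)
    also have "\<dots> = ennreal (5 ^ n * \<omega> / m) * ennreal (m * r i ^ n)"
      using m \<omega> rB[OF i] by (simp add: ennreal_mult'[symmetric] power_mult_distrib field_simps)
    also have "\<dots> \<le> ennreal (5 ^ n * \<omega> / m) * emeasure \<mu> (ball i (r i) \<inter> Out)"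
      using r[OF i] by (intro mult_left_mono) auto
    finally show "emeasure lborel (ball i (5 * r i)) \<le> ennreal (5 ^ n * \<omega> / m) * emeasure \<mu> (ball i (r i) \<inter> Out)" .
  qed
  also have "\<dots> = ennreal (5 ^ n * \<omega> / m) * (\<integral>\<^sup>+i. emeasure \<mu> (ball i (r i) \<inter> Out) \<partial>count_space C)"
    by (rule nn_integral_cmult) simp
  also have "(\<integral>\<^sup>+i. emeasure \<mu> (ball i (r i) \<inter> Out) \<partial>count_space C) = emeasure \<mu> (\<Union>i\<in>C. ball i (r i) \<inter> Out)"
  proof (rule emeasure_UN_countable[symmetric])
    show "disjoint_family_on (\<lambda>i. ball i (r i) \<inter> Out) C"
      using pw unfolding disjoint_family_on_def pairwise_def disjnt_def by fastforce
  qed (use C sets Out in auto)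
  also have "emeasure \<mu> (\<Union>i\<in>C. ball i (r i) \<inter> Out) \<le> emeasure \<mu> Out"
    by (rule emeasure_mono) (use sets Out in auto)
  finally have "emeasure lborel U \<le> ennreal (5 ^ n * \<omega> / m) * emeasure \<mu> Out"
    by (simp add: mult_left_mono)
  moreover have "E \<subseteq> U" using cov5 unfolding U_def by simp
  ultimately show ?thesis using Ub unfolding E_def n_def \<omega>_def by blast
qed


context phidec begin

lemma Phi_max_meas: "(\<lambda>s. \<Phi> (max 0 s)) \<in> borel_measurable borel"
proof -
  have "mono (\<lambda>s. - \<Phi> (max 0 s))"
    by (intro monoI) (auto intro!: Phi_le)
  then have "(\<lambda>s. - \<Phi> (max 0 s)) \<in> borel_measurable borel" by (rule borel_measurable_mono)
  then have "(\<lambda>s. - (- \<Phi> (max 0 s))) \<in> borel_measurable borel" by (rule borel_measurable_uminus)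
  then show ?thesis by simp
qed

lemma Phi_dist_meas:
  assumes r: "r > 0" and that: "sets M = sets borel"
  shows "(\<lambda>y. ennreal (\<Phi> (norm (x - y) / r))) \<in> borel_measurable (M::'a::euclidean_space measure)"
proof -
  have "(\<lambda>y. \<Phi> (max 0 (norm (x - y) / r))) \<in> borel_measurable borel"
    by (rule measurable_compose[OF _ Phi_max_meas]) measurable
  moreover have "(\<lambda>y. \<Phi> (max 0 (norm (x - y) / r))) = (\<lambda>y. \<Phi> (norm (x - y) / r))"
    using r by (auto simp: max_def)
  ultimately have "(\<lambda>y. \<Phi> (norm (x - y) / r)) \<in> borel_measurable M"
    using that by (simp cong: measurable_cong_sets)
  then show ?thesis by measurable
qed

lemma upper_bound:
  fixes \<mu> :: "'a::euclidean_space measure" and x :: 'a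
  assumes sets: "sets \<mu> = sets borel" and a: "a \<ge> 0" "norm x > a" and m: "m \<ge> 0"
    and bd: "\<And>s. s > 0 \<Longrightarrow> emeasure \<mu> (ball x s \<inter> (UNIV - cball 0 a)) \<le> ennreal (m * s ^ DIM('a))"
  shows "(SUP r\<in>{0<..}. ennreal (1 / r ^ DIM('a)) * (\<integral>\<^sup>+ y. ennreal (\<Phi> (norm (x - y) / r)) \<partial>\<mu>))
     \<le> ennreal (1 / (norm x - a) ^ DIM('a)) * Ce DIM('a) * emeasure \<mu> (cball 0 a) + ennreal m * Sdy DIM('a)"
proof (rule SUP_least)
  fix r :: real assume "r \<in> {0<..}"
  then have r: "r > 0" by simp
  define n where "n = DIM('a)"
  define Out where "Out = UNIV - cball (0::'a) a"
  have [measurable]: "Out \<in> sets borel" "cball (0::'a) a \<in> sets borel" unfolding Out_def by auto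
  have mOut: "Out \<in> sets \<mu>" "cball 0 a \<in> sets \<mu>" using sets by auto
  have meas: "(\<lambda>y. ennreal (\<Phi> (norm (x - y) / r))) \<in> borel_measurable \<mu>"
    by (rule Phi_dist_meas[OF r sets])
  have "(\<integral>\<^sup>+ y. ennreal (\<Phi> (norm (x - y) / r)) \<partial>\<mu>)
      \<le> (\<integral>\<^sup>+ y. ennreal (\<Phi> ((norm x - a) / r)) * indicator (cball 0 a) y
             + ennreal (\<Phi> (norm (x - y) / r)) * indicator Out y \<partial>\<mu>)"
  proof (intro nn_integral_mono)
    fix y
    show "ennreal (\<Phi> (norm (x - y) / r)) \<le> ennreal (\<Phi> ((norm x - a) / r)) * indicator (cball 0 a) y
             + ennreal (\<Phi> (norm (x - y) / r)) * indicator Out y"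
    proof (cases "y \<in> cball 0 a")
      case True
      then have "norm y \<le> a" by simp
      moreover have "norm x - norm y \<le> norm (x - y)" by (rule norm_triangle_ineq2)
      ultimately have "(norm x - a) / r \<le> norm (x - y) / r" using r by (intro divide_right_mono) auto
      then have "\<Phi> (norm (x - y) / r) \<le> \<Phi> ((norm x - a) / r)" using a r by (intro Phi_le) auto
      then show ?thesis using True by (auto simp: Out_def intro!: ennreal_leI)
    next
      case False
      then show ?thesis by (simp add: Out_def)
    qed
  qed
  also have "\<dots> = ennreal (\<Phi> ((norm x - a) / r)) * emeasure \<mu> (cball 0 a)
       + (\<integral>\<^sup>+ y. ennreal (\<Phi> (norm (x - y) / r)) * indicator Out y \<partial>\<mu>)"
    using mOut meas by (subst nn_integral_add) (auto simp: nn_integral_cmult_indicator)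
  finally have int: "(\<integral>\<^sup>+ y. ennreal (\<Phi> (norm (x - y) / r)) \<partial>\<mu>) \<le> \<dots>" .
  have "ennreal (1 / r ^ n) * (\<integral>\<^sup>+ y. ennreal (\<Phi> (norm (x - y) / r)) \<partial>\<mu>)
     \<le> ennreal (1 / r ^ n) * (ennreal (\<Phi> ((norm x - a) / r)) * emeasure \<mu> (cball 0 a)
       + (\<integral>\<^sup>+ y. ennreal (\<Phi> (norm (x - y) / r)) * indicator Out y \<partial>\<mu>))"
    by (rule mult_left_mono[OF int]) simp
  also have "\<dots> = ennreal (1 / r ^ n * \<Phi> ((norm x - a) / r)) * emeasure \<mu> (cball 0 a)
       + ennreal (1 / r ^ n) * (\<integral>\<^sup>+ y. ennreal (\<Phi> (norm (x - y) / r)) * indicator Out y \<partial>\<mu>)"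
  proof -
    have "(norm x - a) / r \<ge> 0" using a r by simp
    then have e: "ennreal (1 / r ^ n * \<Phi> ((norm x - a) / r)) = ennreal (1 / r ^ n) * ennreal (\<Phi> ((norm x - a) / r))"
      using r \<Phi>_nonneg by (intro ennreal_mult) auto
    show ?thesis by (simp only: e distrib_left mult.assoc)
  qed
  also have "\<dots> \<le> ennreal (1 / (norm x - a) ^ n) * Ce n * emeasure \<mu> (cball 0 a) + ennreal m * Sdy n"
  proof (rule add_mono)
    have "ennreal (1 / r ^ n * \<Phi> ((norm x - a) / r)) \<le> (SUP r\<in>{0<..}. ennreal (1 / r ^ n * \<Phi> ((norm x - a) / r)))"
      using r by (intro SUP_upper) auto
    also have "\<dots> = ennreal (1 / (norm x - a) ^ n) * Ce n" using a by (intro sup_scale) auto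
    finally show "ennreal (1 / r ^ n * \<Phi> ((norm x - a) / r)) * emeasure \<mu> (cball 0 a)
       \<le> ennreal (1 / (norm x - a) ^ n) * Ce n * emeasure \<mu> (cball 0 a)" by (rule mult_right_mono) simp
    show "ennreal (1 / r ^ n) * (\<integral>\<^sup>+ y. ennreal (\<Phi> (norm (x - y) / r)) * indicator Out y \<partial>\<mu>) \<le> ennreal m * Sdy n"
      unfolding n_def by (rule dyadic_integral[OF sets _ r m]) (use bd in \<open>auto simp: Out_def\<close>)
  qed
  finally show "ennreal (1 / r ^ DIM('a)) * (\<integral>\<^sup>+ y. ennreal (\<Phi> (norm (x - y) / r)) \<partial>\<mu>)
     \<le> ennreal (1 / (norm x - a) ^ DIM('a)) * Ce DIM('a) * emeasure \<mu> (cball 0 a) + ennreal m * Sdy DIM('a)"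
    unfolding n_def .
qed

lemma lower_bound:
  fixes \<mu> :: "'a::euclidean_space measure" and x :: 'a
  assumes sets: "sets \<mu> = sets borel" and a: "a \<ge> 0" "norm x + a > 0"
  shows "ennreal (1 / (norm x + a) ^ DIM('a)) * Ce DIM('a) * emeasure \<mu> (cball 0 a)
     \<le> (SUP r\<in>{0<..}. ennreal (1 / r ^ DIM('a)) * (\<integral>\<^sup>+ y. ennreal (\<Phi> (norm (x - y) / r)) \<partial>\<mu>))"
proof -
  define n where "n = DIM('a)"
  have mc: "cball 0 a \<in> sets \<mu>" using sets by auto
  have "ennreal (1 / (norm x + a) ^ n) * Ce n * emeasure \<mu> (cball 0 a)
      = (SUP r\<in>{0<..}. ennreal (1 / r ^ n * \<Phi> ((norm x + a) / r))) * emeasure \<mu> (cball 0 a)"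
    using a by (subst sup_scale) auto
  also have "\<dots> = (SUP r\<in>{0<..}. ennreal (1 / r ^ n * \<Phi> ((norm x + a) / r)) * emeasure \<mu> (cball 0 a))"
    by (rule SUP_mult_right_ennreal)
  also have "\<dots> \<le> (SUP r\<in>{0<..}. ennreal (1 / r ^ n) * (\<integral>\<^sup>+ y. ennreal (\<Phi> (norm (x - y) / r)) \<partial>\<mu>))"
  proof (rule SUP_mono)
    fix r :: real assume "r \<in> {0<..}"
    then have r: "r > 0" by simp
    have "ennreal (1 / r ^ n * \<Phi> ((norm x + a) / r)) * emeasure \<mu> (cball 0 a)
       = ennreal (1 / r ^ n) * (\<integral>\<^sup>+ y. ennreal (\<Phi> ((norm x + a) / r)) * indicator (cball 0 a) y \<partial>\<mu>)"
    proof -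
      have "(norm x + a) / r \<ge> 0" using a r by simp
      then have e: "ennreal (1 / r ^ n * \<Phi> ((norm x + a) / r)) = ennreal (1 / r ^ n) * ennreal (\<Phi> ((norm x + a) / r))"
        using r \<Phi>_nonneg by (intro ennreal_mult) auto
      show ?thesis using mc by (simp only: e nn_integral_cmult_indicator mult.assoc)
    qed
    also have "\<dots> \<le> ennreal (1 / r ^ n) * (\<integral>\<^sup>+ y. ennreal (\<Phi> (norm (x - y) / r)) \<partial>\<mu>)"
    proof (intro mult_left_mono nn_integral_mono)
      fix y
      show "ennreal (\<Phi> ((norm x + a) / r)) * indicator (cball 0 a) y \<le> ennreal (\<Phi> (norm (x - y) / r))"
      proof (cases "y \<in> cball 0 a")
        case True
        then have "norm y \<le> a" by simp
        moreover have "norm (x - y) \<le> norm x + norm y" by (rule norm_triangle_ineq4)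
        ultimately have "norm (x - y) / r \<le> (norm x + a) / r" using r by (intro divide_right_mono) auto
        then have "\<Phi> ((norm x + a) / r) \<le> \<Phi> (norm (x - y) / r)" using r by (intro Phi_le) auto
        then show ?thesis using True by (auto intro!: ennreal_leI)
      qed simp
    qed simp
    finally show "\<exists>r'\<in>{0<..}. ennreal (1 / r ^ n * \<Phi> ((norm x + a) / r)) * emeasure \<mu> (cball 0 a)
       \<le> ennreal (1 / r' ^ n) * (\<integral>\<^sup>+ y. ennreal (\<Phi> (norm (x - y) / r')) \<partial>\<mu>)" using r by blast
  qed
  finally show ?thesis unfolding n_def .
qed

end

lemma real_key:
  fixes c F \<eta> P q1 q2 s M :: real
  assumes "0 \<le> c" "0 \<le> F" "0 \<le> \<eta>" "0 \<le> P" "1 \<le> q1" "0 \<le> q2" "q2 \<le> 1" "0 < s"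
    "M \<le> c * F * q1 * P + s / 2" "c * (F - \<eta>) * q2 * P \<le> M" "s < \<bar>M - c * F * P\<bar>"
  shows "s / 2 < (c * F * ((q1 - 1) + (1 - q2)) + c * \<eta>) * P"
proof -
  define u where "u = c * F * P"
  define v where "v = c * \<eta> * P"
  have u: "u \<ge> 0" "v \<ge> 0" unfolding u_def v_def using assms by auto
  have h1: "M \<le> u * q1 + s / 2" using assms(9) unfolding u_def by (simp add: mult_ac)
  have h2: "(u - v) * q2 \<le> M" using assms(10) unfolding u_def v_def by (simp add: algebra_simps)
  have goal: "(c * F * ((q1 - 1) + (1 - q2)) + c * \<eta>) * P = u * (q1 - 1) + u * (1 - q2) + v"
    unfolding u_def v_def by (simp add: algebra_simps)
  have p1: "u * (q1 - 1) \<ge> 0" "u * (1 - q2) \<ge> 0" using u assms by auto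
  have p2: "v * q2 \<le> v" using u assms by (simp add: mult_left_le)
  have "s < \<bar>M - u\<bar>" using assms(11) unfolding u_def .
  then have "s < M - u \<or> s < u - M" by linarith
  then show ?thesis
  proof
    assume "s < M - u"
    then have "s < u * q1 + s / 2 - u" using h1 by linarith
    then have "s / 2 < u * (q1 - 1)" by (simp add: algebra_simps)
    then show ?thesis unfolding goal using p1 u by linarith
  next
    assume "s < u - M"
    then have "s < u - (u - v) * q2" using h2 by linarith
    then have "s < u * (1 - q2) + v * q2" by (simp add: algebra_simps)
    then show ?thesis unfolding goal using p1 p2 u assms(8) by linarith
  qed
qed

theorem corollary2p3:
  fixes \<Phi> :: "real \<Rightarrow> real" and \<phi> :: "'a::euclidean_space \<Rightarrow> real"
    and V :: "'a measure" and \<rho> :: real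
  assumes \<phi>_def: "\<And>x. \<phi> x = \<Phi> (norm x)"
    and \<Phi>_nonneg: "\<And>s. s \<ge> 0 \<Longrightarrow> \<Phi> s \<ge> 0"
    and \<Phi>_decr: "antimono_on {0..} \<Phi>"
    and majorant: "\<exists>\<kappa>::real \<Rightarrow> real. antimono_on {0..} \<kappa>
        \<and> (\<forall>x. \<phi> x \<le> \<kappa> (norm x))
        \<and> continuous_on UNIV (\<lambda>x::'a. \<kappa> (norm x))
        \<and> integrable lborel (\<lambda>x::'a. \<kappa> (norm x))"
    and V_sets: "sets V = sets borel"
    and V_finite: "emeasure V UNIV < \<infinity>"
    and V_ac: "absolutely_continuous lborel V"
    and \<rho>_pos: "\<rho> > 0"
  shows "((\<lambda>t. weak_L1_norm (UNIV - ball 0 \<rho>)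
            (\<lambda>x. enn2ereal (max_op \<phi> (dilate_measure t V) x)
                 - enn2ereal (sup_dil \<phi> x * emeasure V UNIV)))
          \<longlongrightarrow> 0) (at_right 0)"
proof -
  interpret phidec \<Phi> using \<Phi>_nonneg \<Phi>_decr by unfold_locales auto
  obtain \<kappa> :: "real \<Rightarrow> real" where \<kappa>le: "\<And>x. \<phi> x \<le> \<kappa> (norm x)"
    and \<kappa>int: "integrable lborel (\<lambda>x::'a. \<kappa> (norm x))"
    using majorant by blast
  define n where "n = DIM('a)"
  have n1: "n \<ge> 1" unfolding n_def by (simp add: DIM_positive Suc_leI)
  define \<omega> where "\<omega> = unit_ball_vol (real n)"
  have \<omega>: "\<omega> > 0" unfolding \<omega>_def by simp
  have \<phi>eq: "\<phi> = (\<lambda>x. \<Phi> (norm x))" using \<phi>_def by auto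
  have spV: "space V = UNIV" using sets_eq_imp_space_eq[OF V_sets] by simp
  have Ifin: "(\<integral>\<^sup>+ (z::'a). ennreal (\<Phi> (norm z)) \<partial>lborel) < \<infinity>"
  proof -
    have "(\<integral>\<^sup>+ (z::'a). ennreal (\<Phi> (norm z)) \<partial>lborel) \<le> (\<integral>\<^sup>+ (z::'a). ennreal (\<kappa> (norm z)) \<partial>lborel)"
      by (intro nn_integral_mono ennreal_leI) (use \<kappa>le \<phi>_def in auto)
    also have "\<dots> < \<infinity>" using integrableD(2)[OF \<kappa>int] by (simp add: less_top)
    finally show ?thesis .
  qed
  define Cr where "Cr = enn2real (Ce n)"
  have Ce: "Ce n = ennreal Cr" "Cr \<ge> 0" unfolding Cr_def n_def using Ce_finite[OF Ifin] by auto
  define Sr where "Sr = enn2real (Sdy n) + 1"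
  have Sr: "Sdy n \<le> ennreal Sr" "Sr > 0"
  proof -
    have "Sdy n = ennreal (enn2real (Sdy n))" unfolding n_def using Sdy_finite[OF Ifin] by auto
    also have "\<dots> \<le> ennreal Sr" unfolding Sr_def by (intro ennreal_leI) simp
    finally show "Sdy n \<le> ennreal Sr" .
    show "Sr > 0" unfolding Sr_def by (simp add: add_nonneg_pos)
  qed
  interpret V: finite_measure V using V_finite spV by (intro finite_measureI) auto
  define F where "F = measure V UNIV"
  have F: "emeasure V UNIV = ennreal F" "F \<ge> 0" unfolding F_def using V.emeasure_eq_measure by auto
  define \<eta> where "\<eta> R = measure V (UNIV - cball 0 R)" for R
  have \<eta>: "\<eta> R \<ge> 0" "\<eta> R \<le> F" "emeasure V (UNIV - cball 0 R) = ennreal (\<eta> R)"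
       "emeasure V (cball 0 R) = ennreal (F - \<eta> R)" for R
  proof -
    show "\<eta> R \<ge> 0" unfolding \<eta>_def by simp
    show "\<eta> R \<le> F" unfolding \<eta>_def F_def using V_sets by (intro V.finite_measure_mono) auto
    show "emeasure V (UNIV - cball 0 R) = ennreal (\<eta> R)" unfolding \<eta>_def using V.emeasure_eq_measure by auto
    have "measure V (space V - cball 0 R) = measure V (space V) - measure V (cball 0 R)"
      using V_sets by (intro V.finite_measure_compl) auto
    then have "measure V (cball 0 R) = F - \<eta> R" unfolding \<eta>_def F_def spV by simp
    then show "emeasure V (cball 0 R) = ennreal (F - \<eta> R)" using V.emeasure_eq_measure by auto
  qed
  have supdil: "sup_dil \<phi> x * emeasure V UNIV = ennreal (Cr * F * (1 / norm x ^ n))" if "x \<noteq> 0" for x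
  proof -
    have "sup_dil \<phi> x = (SUP r\<in>{0<..}. ennreal (1 / r ^ n * \<Phi> (norm x / r)))"
      unfolding sup_dil_def \<phi>eq n_def by (intro SUP_cong refl) (auto simp: divide_inverse mult.commute)
    also have "\<dots> = ennreal (1 / norm x ^ n) * Ce n" using that by (intro sup_scale) auto
    finally show ?thesis using F Ce by (simp add: ennreal_mult'[symmetric] mult_ac)
  qed
  have maxop: "max_op \<phi> \<mu> x = (SUP r\<in>{0<..}. ennreal (1 / r ^ n) * (\<integral>\<^sup>+ y. ennreal (\<Phi> (norm (x - y) / r)) \<partial>\<mu>))" for \<mu> x
    unfolding max_op_def \<phi>eq n_def
    by (intro SUP_cong refl arg_cong2[where f="(*)"] nn_integral_cong) (auto simp: divide_inverse mult.commute)
  have dil_sets: "sets (dilate_measure t V) = sets borel" for t unfolding dilate_measure_def by simp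
  have dil_em: "emeasure (dilate_measure t V) A = emeasure V ((\<lambda>y. t *\<^sub>R y) -` A)" if "A \<in> sets borel" for t A
    unfolding dilate_measure_def using that V_sets
    by (subst emeasure_distr) (auto simp: spV measurable_cong_sets[OF V_sets refl])
  have dil_cball: "emeasure (dilate_measure t V) (cball 0 (t * R)) = ennreal (F - \<eta> R)"
     "emeasure (dilate_measure t V) (UNIV - cball 0 (t * R)) = ennreal (\<eta> R)" if "t > 0" for t R
  proof -
    have "(\<lambda>y. t *\<^sub>R y) -` cball 0 (t * R) = cball (0::'a) R" using that by auto
    then show "emeasure (dilate_measure t V) (cball 0 (t * R)) = ennreal (F - \<eta> R)"
      using dil_em[of "cball 0 (t * R)" t] \<eta>(4) by simp
    have "(\<lambda>y. t *\<^sub>R y) -` (UNIV - cball 0 (t * R)) = UNIV - cball (0::'a) R" using that by auto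
    then show "emeasure (dilate_measure t V) (UNIV - cball 0 (t * R)) = ennreal (\<eta> R)"
      using dil_em[of "UNIV - cball 0 (t * R)" t] \<eta>(3) by simp
  qed
  define f where "f t x = enn2ereal (max_op \<phi> (dilate_measure t V) x) - enn2ereal (sup_dil \<phi> x * emeasure V UNIV)" for t x
  define g where "g \<delta> = (1 / (1 - \<delta>) ^ n - 1) + (1 - 1 / (1 + \<delta>) ^ n)" for \<delta> :: real
  define B where "B R \<delta> = (2 * 5 ^ n * \<omega> * Sr + 2 * \<omega> * Cr) * \<eta> R + 2 * \<omega> * Cr * F * g \<delta>" for R \<delta>
  have est: "ennreal s * leb_outer {x \<in> UNIV - ball 0 \<rho>. ereal s < \<bar>f t x\<bar>} \<le> ennreal (B R \<delta>)"
    if R: "R > 0" and \<delta>: "0 < \<delta>" "\<delta> \<le> 1 / 2" and t: "t > 0" "t * R \<le> \<delta> * \<rho>" and s: "s > 0" for R \<delta> t s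
  proof -
    define \<mu> where "\<mu> = dilate_measure t V"
    define a where "a = t * R"
    have a: "a \<ge> 0" unfolding a_def using t R by simp
    define Out where "Out = UNIV - cball (0::'a) a"
    have Outb: "Out \<in> sets borel" unfolding Out_def by auto
    have \<mu>sets: "sets \<mu> = sets borel" unfolding \<mu>_def by (rule dil_sets)
    have \<mu>c: "emeasure \<mu> (cball 0 a) = ennreal (F - \<eta> R)" "emeasure \<mu> Out = ennreal (\<eta> R)"
      unfolding \<mu>_def a_def Out_def using dil_cball[OF t(1)] by auto
    define m where "m = s / (2 * Sr)"
    have m: "m > 0" "m * Sr = s / 2" unfolding m_def using s Sr by auto
    obtain U where U: "U \<in> sets borel"
      and EU: "{x. \<exists>s>0. ennreal (m * s ^ DIM('a)) < emeasure \<mu> (ball x s \<inter> Out)} \<subseteq> U"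
      and Um: "emeasure lborel U \<le> ennreal (5 ^ DIM('a) * unit_ball_vol (real DIM('a)) / m) * emeasure \<mu> Out"
      using vitali_weak[OF \<mu>sets Outb _ m(1)] \<mu>c by auto
    have g0: "1 / (1 - \<delta>) ^ n \<ge> 1" "1 / (1 + \<delta>) ^ n \<le> 1" "1 / (1 + \<delta>) ^ n \<ge> 0"
    proof -
      have "(1 - \<delta>) ^ n \<le> 1" "(1 - \<delta>) ^ n > 0" using \<delta> by (auto intro: power_le_one)
      then show "1 / (1 - \<delta>) ^ n \<ge> 1" by simp
      have "(1 + \<delta>) ^ n \<ge> 1" using \<delta> by (auto intro: one_le_power)
      then show "1 / (1 + \<delta>) ^ n \<le> 1" by simp
      show "1 / (1 + \<delta>) ^ n \<ge> 0" using \<delta> by simp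
    qed
    define \<alpha> where "\<alpha> = Cr * F * g \<delta> + Cr * \<eta> R"
    have \<alpha>: "\<alpha> \<ge> 0" unfolding \<alpha>_def g_def using g0 Ce F \<eta> by auto
    define \<rho>2 where "\<rho>2 = root n (2 * \<alpha> / s)"
    have \<rho>2: "\<rho>2 ^ n = 2 * \<alpha> / s" "\<rho>2 \<ge> 0" unfolding \<rho>2_def using n1 \<alpha> s by auto
    have sub: "{x \<in> UNIV - ball 0 \<rho>. ereal s < \<bar>f t x\<bar>} \<subseteq> U \<union> cball 0 \<rho>2"
    proof
      fix x assume x: "x \<in> {x \<in> UNIV - ball 0 \<rho>. ereal s < \<bar>f t x\<bar>}"
      show "x \<in> U \<union> cball 0 \<rho>2"
      proof (cases "x \<in> U")
        case False
        define X where "X = norm x"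
        have X: "X \<ge> \<rho>" using x unfolding X_def by auto
        have aX: "a \<le> \<delta> * X" using t \<delta> X unfolding a_def by (smt (verit) mult_left_mono)
        have X0: "X > 0" using X \<rho>_pos by simp
        have x0: "x \<noteq> 0" using X0 unfolding X_def by auto
        have "\<delta> * X \<le> (1 / 2) * X" using \<delta> X0 by (intro mult_right_mono) auto
        then have aXlt: "a < X" using aX X0 by linarith
        have bd: "emeasure \<mu> (ball x s' \<inter> (UNIV - cball 0 a)) \<le> ennreal (m * s' ^ DIM('a))" if "s' > 0" for s'
        proof (rule ccontr)
          assume "\<not> ?thesis"
          then have "ennreal (m * s' ^ DIM('a)) < emeasure \<mu> (ball x s' \<inter> Out)" unfolding Out_def by (simp add: not_le)
          then have "x \<in> {x. \<exists>s>0. ennreal (m * s ^ DIM('a)) < emeasure \<mu> (ball x s \<inter> Out)}" using that by blast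
          then show False using EU False by blast
        qed
        have Mup: "max_op \<phi> \<mu> x \<le> ennreal (Cr * F * (1 / (X - a) ^ n) + s / 2)"
        proof -
          have "max_op \<phi> \<mu> x \<le> ennreal (1 / (norm x - a) ^ DIM('a)) * Ce DIM('a) * emeasure \<mu> (cball 0 a) + ennreal m * Sdy DIM('a)"
            unfolding maxop n_def using aXlt \<delta> X0 a m
            by (intro upper_bound[OF \<mu>sets a] bd) (auto simp: X_def)
          also have "\<dots> = ennreal (1 / (X - a) ^ n) * ennreal Cr * ennreal (F - \<eta> R) + ennreal m * Sdy n"
            using \<mu>c Ce by (simp add: X_def n_def)
          also have "\<dots> \<le> ennreal (1 / (X - a) ^ n) * ennreal Cr * ennreal F + ennreal m * ennreal Sr"
          proof (rule add_mono)
            show "ennreal (1 / (X - a) ^ n) * ennreal Cr * ennreal (F - \<eta> R) \<le> ennreal (1 / (X - a) ^ n) * ennreal Cr * ennreal F"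
              by (rule mult_left_mono) (use \<eta>(1)[of R] in \<open>auto intro: ennreal_leI\<close>)
            show "ennreal m * Sdy n \<le> ennreal m * ennreal Sr"
              by (rule mult_left_mono) (use Sr in auto)
          qed
          also have "\<dots> = ennreal (Cr * F * (1 / (X - a) ^ n) + s / 2)"
            using Ce F m aX aXlt \<delta> X0 Sr
            by (subst ennreal_plus) (auto simp: ennreal_mult'[symmetric] mult_ac)
          finally show ?thesis .
        qed
        have Mlo: "ennreal (Cr * (F - \<eta> R) * (1 / (X + a) ^ n)) \<le> max_op \<phi> \<mu> x"
        proof -
          have "ennreal (Cr * (F - \<eta> R) * (1 / (X + a) ^ n)) = ennreal (1 / (norm x + a) ^ DIM('a)) * Ce DIM('a) * emeasure \<mu> (cball 0 a)"
            using \<mu>c \<eta> Ce a X0 unfolding X_def n_def by (simp add: ennreal_mult'[symmetric] mult_ac)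
          also have "\<dots> \<le> max_op \<phi> \<mu> x"
            unfolding maxop n_def using a X0 by (intro lower_bound[OF \<mu>sets a]) (auto simp: X_def intro!: add_pos_nonneg)
          finally show ?thesis .
        qed
        define Mr where "Mr = enn2real (max_op \<phi> \<mu> x)"
        have Mfin: "max_op \<phi> \<mu> x = ennreal Mr" "Mr \<ge> 0"
        proof -
          have Mtop: "max_op \<phi> \<mu> x \<noteq> top" using Mup by (metis ennreal_neq_top neq_top_trans)
          then show "max_op \<phi> \<mu> x = ennreal Mr" unfolding Mr_def by (simp add: ennreal_enn2real_if)
          show "Mr \<ge> 0" unfolding Mr_def by simp
        qed
        have nn1: "Cr * F * (1 / (X - a) ^ n) \<ge> 0" using Ce F aXlt by simp
        have Mr1: "Mr \<le> Cr * F * (1 / (X - a) ^ n) + s / 2"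
          using Mup nn1 s unfolding Mfin(1) by (subst (asm) ennreal_le_iff) auto
        have nn2: "Cr * (F - \<eta> R) * (1 / (X + a) ^ n) \<ge> 0" using Ce \<eta>[of R] a X0 by simp
        have Mr2: "Cr * (F - \<eta> R) * (1 / (X + a) ^ n) \<le> Mr"
          using Mlo nn2 Mfin unfolding Mfin(1) by (subst (asm) ennreal_le_iff) auto
        have fx: "f t x = ereal (Mr - Cr * F * (1 / X ^ n))"
          unfolding f_def \<mu>_def[symmetric] Mfin(1) supdil[OF x0] X_def[symmetric]
          using Mfin Ce F X0 by simp
        have sx: "s < \<bar>Mr - Cr * F * (1 / X ^ n)\<bar>" using x fx by auto
        have q1: "1 / (X - a) ^ n \<le> (1 / (1 - \<delta>) ^ n) * (1 / X ^ n)"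
        proof -
          have "(1 - \<delta>) * X \<le> X - a" using aX by (simp add: algebra_simps)
          moreover have "(1 - \<delta>) * X > 0" using \<delta> X0 by simp
          ultimately have "((1 - \<delta>) * X) ^ n \<le> (X - a) ^ n" by (intro power_mono) auto
          then have "1 / (X - a) ^ n \<le> 1 / ((1 - \<delta>) * X) ^ n"
            using \<open>(1 - \<delta>) * X > 0\<close> aXlt \<delta> X0 by (intro divide_left_mono mult_pos_pos zero_less_power) auto
          then show ?thesis by (simp add: power_mult_distrib)
        qed
        have q2: "(1 / (1 + \<delta>) ^ n) * (1 / X ^ n) \<le> 1 / (X + a) ^ n"
        proof -
          have "X + a \<le> (1 + \<delta>) * X" using aX by (simp add: algebra_simps)
          moreover have "X + a > 0" using a X0 by simp
          ultimately have "(X + a) ^ n \<le> ((1 + \<delta>) * X) ^ n" by (intro power_mono) auto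
          then have "1 / ((1 + \<delta>) * X) ^ n \<le> 1 / (X + a) ^ n"
            using \<open>X + a > 0\<close> \<delta> X0 by (intro divide_left_mono mult_pos_pos zero_less_power) auto
          then show ?thesis by (simp add: power_mult_distrib)
        qed
        have key: "s / 2 < (Cr * F * ((1 / (1 - \<delta>) ^ n - 1) + (1 - 1 / (1 + \<delta>) ^ n)) + Cr * \<eta> R) * (1 / X ^ n)"
        proof (rule real_key[where M = Mr])
          show "Mr \<le> Cr * F * (1 / (1 - \<delta>) ^ n) * (1 / X ^ n) + s / 2"
            using Mr1 mult_left_mono[OF q1, of "Cr * F"] Ce F by (simp add: mult_ac)
          show "Cr * (F - \<eta> R) * (1 / (1 + \<delta>) ^ n) * (1 / X ^ n) \<le> Mr"
            using Mr2 mult_left_mono[OF q2, of "Cr * (F - \<eta> R)"] Ce \<eta>[of R] by (simp add: mult_ac)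
        qed (use Ce F \<eta>[of R] X0 g0 s sx in auto)
        then have "s / 2 < \<alpha> / X ^ n" unfolding \<alpha>_def g_def by simp
        then have "X ^ n < 2 * \<alpha> / s" using s X0 by (simp add: field_simps)
        then have "X ^ n < \<rho>2 ^ n" using \<rho>2 by simp
        then have "X \<le> \<rho>2" using \<rho>2(2) X0 n1 by (meson power_less_imp_less_base less_imp_le)
        then show ?thesis unfolding X_def by simp
      qed simp
    qed
    have Cb: "U \<union> cball 0 \<rho>2 \<in> sets borel" using U by auto
    have "leb_outer {x \<in> UNIV - ball 0 \<rho>. ereal s < \<bar>f t x\<bar>} \<le> emeasure lebesgue (U \<union> cball 0 \<rho>2)"
      unfolding leb_outer_def by (rule INF_lower) (use Cb sub in auto)
    also have "\<dots> = emeasure lborel (U \<union> cball 0 \<rho>2)" using Cb by simp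
    also have "\<dots> \<le> emeasure lborel U + emeasure lborel (cball (0::'a) \<rho>2)"
      using Cb U by (intro emeasure_subadditive) auto
    also have "\<dots> \<le> ennreal (5 ^ n * \<omega> / m) * ennreal (\<eta> R) + ennreal (\<omega> * (2 * \<alpha> / s))"
      using Um \<mu>c \<rho>2 by (intro add_mono) (auto simp: emeasure_cball n_def \<omega>_def)
    also have "\<dots> = ennreal (5 ^ n * \<omega> / m * \<eta> R + \<omega> * (2 * \<alpha> / s))"
      using \<omega> m \<eta>[of R] \<alpha> s by (simp add: ennreal_mult'[symmetric] ennreal_plus)
    finally have "ennreal s * leb_outer {x \<in> UNIV - ball 0 \<rho>. ereal s < \<bar>f t x\<bar>}
        \<le> ennreal s * ennreal (5 ^ n * \<omega> / m * \<eta> R + \<omega> * (2 * \<alpha> / s))"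
      by (rule mult_left_mono) simp
    also have "\<dots> = ennreal (s * (5 ^ n * \<omega> / m * \<eta> R + \<omega> * (2 * \<alpha> / s)))"
      by (rule ennreal_mult'[symmetric]) (use s in simp)
    also have "s * (5 ^ n * \<omega> / m * \<eta> R + \<omega> * (2 * \<alpha> / s)) = B R \<delta>"
      unfolding B_def \<alpha>_def m_def using s Sr by (simp add: field_simps)
    finally show ?thesis .
  qed
  have weak: "weak_L1_norm (UNIV - ball 0 \<rho>) (f t) \<le> ennreal (B R \<delta>)"
    if "R > 0" "0 < \<delta>" "\<delta> \<le> 1 / 2" "t > 0" "t * R \<le> \<delta> * \<rho>" for R \<delta> t
    unfolding weak_L1_norm_def by (rule SUP_least) (use est[OF that] in auto)
  define K0 where "K0 = 2 * 5 ^ n * \<omega> * Sr + 2 * \<omega> * Cr"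
  have cancel: "\<And>c e::real. c \<noteq> 0 \<Longrightarrow> c * (e / c) = e" by simp
  have K0: "K0 \<ge> 0" unfolding K0_def using \<omega> Sr Ce by auto
  have ev: "eventually (\<lambda>t. weak_L1_norm (UNIV - ball 0 \<rho>) (f t) \<le> ennreal \<epsilon>) (at_right 0)" if \<epsilon>: "\<epsilon> > 0" for \<epsilon>
  proof -
    define \<tau>1 where "\<tau>1 = (\<epsilon> / 2) / (K0 + 1)"
    have \<tau>1: "\<tau>1 > 0" "K0 * \<tau>1 \<le> \<epsilon> / 2"
    proof -
      show t0: "\<tau>1 > 0" unfolding \<tau>1_def using \<epsilon> K0 by (intro divide_pos_pos) auto
      have "K0 + 1 \<noteq> 0" using K0 by simp
      then have "(K0 + 1) * \<tau>1 = \<epsilon> / 2" unfolding \<tau>1_def by (rule cancel)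
      moreover have "K0 * \<tau>1 \<le> (K0 + 1) * \<tau>1" using t0 by (intro mult_right_mono) auto
      ultimately show "K0 * \<tau>1 \<le> \<epsilon> / 2" by linarith
    qed
    have lim0: "(\<lambda>k. emeasure V (UNIV - cball 0 (real k))) \<longlonglongrightarrow> emeasure V (\<Inter>k. UNIV - cball 0 (real k))"
    proof (rule Lim_emeasure_decseq)
      have "UNIV - cball (0::'a) r \<in> sets V" for r unfolding V_sets by (intro borel_closed sets.Diff) auto
      then show "range (\<lambda>k. UNIV - cball (0::'a) (real k)) \<subseteq> sets V" by blast
      show "decseq (\<lambda>k. UNIV - cball (0::'a) (real k))" unfolding decseq_def by auto
      show "emeasure V (UNIV - cball 0 (real k)) \<noteq> \<infinity>" for k using V.emeasure_eq_measure by simp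
    qed
    have empt: "(\<Inter>k. UNIV - cball (0::'a) (real k)) = {}"
    proof -
      have "\<exists>k. y \<in> cball (0::'a) (real k)" for y :: 'a
        using reals_Archimedean2[of "norm y"] by (auto intro: less_imp_le)
      then show ?thesis by blast
    qed
    have "(\<lambda>k. emeasure V (UNIV - cball 0 (real k))) \<longlonglongrightarrow> 0" using lim0[unfolded empt] by simp
    then have "eventually (\<lambda>k. emeasure V (UNIV - cball 0 (real k)) < ennreal \<tau>1) sequentially"
      using \<tau>1 by (intro order_tendstoD(2)) auto
    then obtain N where N: "\<And>k. k \<ge> N \<Longrightarrow> emeasure V (UNIV - cball 0 (real k)) < ennreal \<tau>1"
      by (auto simp: eventually_sequentially)
    define R where "R = real (N + 1)"
    have R: "R > 0" unfolding R_def by simp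
    have "ennreal (\<eta> R) < ennreal \<tau>1" using N[of "N + 1"] \<eta>(3)[of R] unfolding R_def by simp
    then have "\<eta> R < \<tau>1" using \<eta>(1)[of R] by (subst (asm) ennreal_less_iff) auto
    then have KR: "K0 * \<eta> R \<le> \<epsilon> / 2" using K0 \<tau>1 by (smt (verit) mult_left_mono)
    define \<tau>2 where "\<tau>2 = (\<epsilon> / 2) / (2 * \<omega> * Cr * F + 1)"
    have c2: "2 * \<omega> * Cr * F \<ge> 0" using \<omega> Ce F by auto
    have \<tau>2: "\<tau>2 > 0" "2 * \<omega> * Cr * F * \<tau>2 \<le> \<epsilon> / 2"
    proof -
      have "2 * \<omega> * Cr * F + 1 > 0" using c2 by linarith
      then show t0: "\<tau>2 > 0" unfolding \<tau>2_def using \<epsilon> by (intro divide_pos_pos) auto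
      have "2 * \<omega> * Cr * F + 1 \<noteq> 0" using c2 by linarith
      then have "(2 * \<omega> * Cr * F + 1) * \<tau>2 = \<epsilon> / 2" unfolding \<tau>2_def by (rule cancel)
      moreover have "2 * \<omega> * Cr * F * \<tau>2 \<le> (2 * \<omega> * Cr * F + 1) * \<tau>2" using t0 by (intro mult_right_mono) auto
      ultimately show "2 * \<omega> * Cr * F * \<tau>2 \<le> \<epsilon> / 2" by linarith
    qed
    have "(g \<longlongrightarrow> (1 / (1 - 0) ^ n - 1) + (1 - 1 / (1 + 0) ^ n)) (at_right (0::real))"
      unfolding g_def by (intro tendsto_intros) auto
    then have "(g \<longlongrightarrow> 0) (at_right 0)" by simp
    then have "eventually (\<lambda>\<delta>. g \<delta> < \<tau>2) (at_right 0)" using \<tau>2 by (intro order_tendstoD(2)) auto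
    then obtain b where b: "b > 0" "\<And>y. y > 0 \<Longrightarrow> y < b \<Longrightarrow> g y < \<tau>2"
      unfolding eventually_at_right_field by auto
    define \<delta> where "\<delta> = min (b / 2) (1 / 2)"
    have \<delta>: "0 < \<delta>" "\<delta> \<le> 1 / 2" "g \<delta> < \<tau>2" unfolding \<delta>_def using b by auto
    have "2 * \<omega> * Cr * F * g \<delta> \<le> 2 * \<omega> * Cr * F * \<tau>2" using c2 \<delta> by (intro mult_left_mono) auto
    then have BRd: "B R \<delta> \<le> \<epsilon>" unfolding B_def K0_def[symmetric] using KR \<tau>2 by linarith
    show ?thesis unfolding eventually_at_right_field
    proof (intro exI conjI allI impI)
      show "0 < \<delta> * \<rho> / R" using \<delta> \<rho>_pos R by simp
      fix t :: real assume t: "0 < t" "t < \<delta> * \<rho> / R"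
      then have "t * R \<le> \<delta> * \<rho>" using R by (simp add: field_simps)
      then have "weak_L1_norm (UNIV - ball 0 \<rho>) (f t) \<le> ennreal (B R \<delta>)"
        using weak[OF R \<delta>(1,2) t(1)] by simp
      also have "\<dots> \<le> ennreal \<epsilon>" using BRd by (rule ennreal_leI)
      finally show "weak_L1_norm (UNIV - ball 0 \<rho>) (f t) \<le> ennreal \<epsilon>" .
    qed
  qed
  have lim: "((\<lambda>t. weak_L1_norm (UNIV - ball 0 \<rho>) (f t)) \<longlongrightarrow> 0) (at_right 0)"
  proof (rule order_tendstoI)
    fix a :: ennreal assume "a < 0" then show "eventually (\<lambda>t. a < weak_L1_norm (UNIV - ball 0 \<rho>) (f t)) (at_right 0)"
      by simp
  next
    fix a :: ennreal assume a: "0 < a"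
    obtain b where b: "0 < b" "b < a" using dense[OF a] by blast
    have btop: "b < top" by (rule less_le_trans[OF b(2) top_greatest])
    define \<epsilon> where "\<epsilon> = enn2real b"
    have \<epsilon>: "\<epsilon> > 0" "ennreal \<epsilon> = b" unfolding \<epsilon>_def using b btop by (auto simp: enn2real_positive_iff less_top)
    show "eventually (\<lambda>t. weak_L1_norm (UNIV - ball 0 \<rho>) (f t) < a) (at_right 0)"
      using ev[OF \<epsilon>(1)] by (rule eventually_mono) (use \<epsilon> b in auto)
  qed
  then show ?thesis unfolding f_def by simp
qed

end
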